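(* Let $k$ be a field of characteristic $p>0$, let $d_1,\ldots,d_n$ be positive integers and $A = k[x_1,\ldots,x_n]/(x_1^{d_1}, \ldots, x_n^{d_n})$. Write $d_i = N_i p + r_i$ with $N_i$ integers and $0 < r_i \le p$. Let $\Lambda\subseteq\{1,\ldots,n\}$ be an index set such that $d_i>r_i$ for all $i \in \Lambda$, and let $m=\sum_{i=1}^nN_i-|\Lambda|+1$. If \[\sum_{i \in \Lambda}r_i \le \frac{\sum_{i=1}^n(d_i-1)-mp}{2}, \] or equivalently \[ \sum_{i \in \Lambda}r_i \le \sum_{i \notin \Lambda} r_i -n+(|\Lambda|-1)p, \] then $A$ fails to have the strong Lefschetz property.
   Context: $A$ is graded by degree, $A=\bigoplus_{i\ge0} A_i$. A linear map has maximal rank if it is injective or surjective. A graded artinian algebra $A$ has the strong Lefschetz property if there is a linear form $\ell\in A_1$ such that for all $i\ge 0$ and all $m\ge 1$ the map $A_i\to A_{i+m}$, $a\mapsto \ell^m a$, has maximal rank. *)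

theory Defs
  imports Main
begin

text \<open>Model of A = k[x_0,...,x_{n-1}]/(x_0^{d_0},...,x_{n-1}^{d_{n-1}}) via its monomial basis.
An element of A is a k-valued coefficient function on exponent vectors supported on standard monomials.\<close>

definition std_mon :: "(nat \<Rightarrow> nat) \<Rightarrow> nat \<Rightarrow> (nat \<Rightarrow> nat) \<Rightarrow> bool" where
  "std_mon d n a \<longleftrightarrow> (\<forall>j<n. a j < d j) \<and> (\<forall>j\<ge>n. a j = 0)"

definition mdeg :: "nat \<Rightarrow> (nat \<Rightarrow> nat) \<Rightarrow> nat" where
  "mdeg n a = (\<Sum>j<n. a j)"

definition Acomp :: "(nat \<Rightarrow> nat) \<Rightarrow> nat \<Rightarrow> nat \<Rightarrow> ((nat \<Rightarrow> nat) \<Rightarrow> 'k::field) set" where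
  "Acomp d n i = {f. \<forall>a. f a \<noteq> 0 \<longrightarrow> std_mon d n a \<and> mdeg n a = i}"

definition mul_var :: "(nat \<Rightarrow> nat) \<Rightarrow> nat \<Rightarrow> nat \<Rightarrow> ((nat \<Rightarrow> nat) \<Rightarrow> 'k::field) \<Rightarrow> ((nat \<Rightarrow> nat) \<Rightarrow> 'k)" where
  "mul_var d n j f = (\<lambda>a. if std_mon d n a \<and> 1 \<le> a j then f (a(j := a j - 1)) else 0)"

definition mul_lin :: "(nat \<Rightarrow> nat) \<Rightarrow> nat \<Rightarrow> (nat \<Rightarrow> 'k::field) \<Rightarrow> ((nat \<Rightarrow> nat) \<Rightarrow> 'k) \<Rightarrow> ((nat \<Rightarrow> nat) \<Rightarrow> 'k)" where
  "mul_lin d n c f = (\<lambda>a. \<Sum>j<n. c j * mul_var d n j f a)"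

definition maximal_rank :: "('a \<Rightarrow> 'b) \<Rightarrow> 'a set \<Rightarrow> 'b set \<Rightarrow> bool" where
  "maximal_rank F V W \<longleftrightarrow> inj_on F V \<or> F ` V = W"

definition has_SLP :: "(nat \<Rightarrow> nat) \<Rightarrow> nat \<Rightarrow> 'k::field itself \<Rightarrow> bool" where
  "has_SLP d n _ \<longleftrightarrow> (\<exists>c :: nat \<Rightarrow> 'k. \<forall>i m. 1 \<le> m \<longrightarrow>
      maximal_rank (mul_lin d n c ^^ m) (Acomp d n i :: ((nat \<Rightarrow> nat) \<Rightarrow> 'k) set) (Acomp d n (i + m)))"

end

theory Submission
  imports Defs "HOL-Library.Function_Algebras" "HOL-Computational_Algebra.Primes"
begin


definition addop :: "('v::comm_ring_1 \<Rightarrow> 'v) \<Rightarrow> bool" where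
  "addop T \<longleftrightarrow> (\<forall>x y. T (x + y) = T x + T y)"

lemma addop_zero: "addop T \<Longrightarrow> T 0 = 0"
  unfolding addop_def by (metis add_0 add_cancel_right_right)

lemma addop_sum: "addop T \<Longrightarrow> T (sum g K) = (\<Sum>k\<in>K. T (g k))"
  by (induct K rule: infinite_finite_induct) (auto simp: addop_zero addop_def)

lemma addop_of_nat: "addop T \<Longrightarrow> T (of_nat k * x) = of_nat k * T x"
  by (induct k) (auto simp: addop_zero addop_def algebra_simps)

lemma addop_funpow: "addop T \<Longrightarrow> addop (T ^^ k)"
  by (induct k) (auto simp: addop_def)

lemma addop_plus: "addop T \<Longrightarrow> addop S \<Longrightarrow> addop (\<lambda>x. T x + S x)"
  by (auto simp: addop_def algebra_simps)

lemma addop_sumop: "(\<And>j. j \<in> J \<Longrightarrow> addop (T j)) \<Longrightarrow> addop (\<lambda>x. \<Sum>j\<in>J. T j x)"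
  by (auto simp: addop_def sum.distrib)

lemma commute_funpow: "(\<And>x. T (S x) = S (T x)) \<Longrightarrow> (T ^^ k) (S x) = S ((T ^^ k) x)"
  by (induct k) auto

lemma pascal_sum:
  fixes G :: "nat \<Rightarrow> nat \<Rightarrow> 'v::comm_ring_1"
  shows "(\<Sum>k\<le>N. of_nat (N choose k) * G (Suc k) (N-k)) + (\<Sum>k\<le>N. of_nat (N choose k) * G k (Suc N - k))
       = (\<Sum>k\<le>Suc N. of_nat (Suc N choose k) * G k (Suc N - k))"
proof -
  have A: "(\<Sum>k\<le>N. of_nat (N choose k) * G k (Suc N - k)) = (\<Sum>k\<le>Suc N. of_nat (N choose k) * G k (Suc N - k))"
    by (simp add: binomial_eq_0)
  also have "\<dots> = G 0 (Suc N) + (\<Sum>k\<le>N. of_nat (N choose Suc k) * G (Suc k) (N - k))"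
    by (subst sum.atMost_Suc_shift) simp
  finally have A': "(\<Sum>k\<le>N. of_nat (N choose k) * G k (Suc N - k)) = G 0 (Suc N) + (\<Sum>k\<le>N. of_nat (N choose Suc k) * G (Suc k) (N - k))" .
  have "(\<Sum>k\<le>Suc N. of_nat (Suc N choose k) * G k (Suc N - k)) = G 0 (Suc N) + (\<Sum>k\<le>N. of_nat (Suc N choose Suc k) * G (Suc k) (N - k))"
    by (subst sum.atMost_Suc_shift) simp
  also have "\<dots> = G 0 (Suc N) + (\<Sum>k\<le>N. of_nat (N choose k) * G (Suc k) (N - k)) + (\<Sum>k\<le>N. of_nat (N choose Suc k) * G (Suc k) (N - k))"
    by (simp add: sum.distrib algebra_simps)
  finally show ?thesis using A' by (simp add: algebra_simps)
qed

lemma op_binomial: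
  assumes T: "addop T" and S: "addop S" and C: "\<And>x. T (S x) = S (T x)"
  shows "((\<lambda>x. T x + S x) ^^ N) x = (\<Sum>k\<le>N. of_nat (N choose k) * (T ^^ k) ((S ^^ (N - k)) x))"
proof (induct N)
  case 0 then show ?case by simp
next
  case (Suc N)
  have "((\<lambda>x. T x + S x) ^^ Suc N) x = T (((\<lambda>x. T x + S x) ^^ N) x) + S (((\<lambda>x. T x + S x) ^^ N) x)"
    by simp
  also have "\<dots> = (\<Sum>k\<le>N. of_nat (N choose k) * (T ^^ Suc k) ((S ^^ (N - k)) x))
     + (\<Sum>k\<le>N. of_nat (N choose k) * (T ^^ k) ((S ^^ (Suc N - k)) x))"
  proof -
    have 1: "T (\<Sum>k\<le>N. of_nat (N choose k) * (T ^^ k) ((S ^^ (N - k)) x)) = (\<Sum>k\<le>N. of_nat (N choose k) * (T ^^ Suc k) ((S ^^ (N - k)) x))"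
      by (simp add: addop_sum[OF T] addop_of_nat[OF T])
    have 2: "S (\<Sum>k\<le>N. of_nat (N choose k) * (T ^^ k) ((S ^^ (N - k)) x)) = (\<Sum>k\<le>N. of_nat (N choose k) * (T ^^ k) ((S ^^ (Suc N - k)) x))"
      unfolding addop_sum[OF S] addop_of_nat[OF S]
    proof (rule sum.cong[OF refl])
      fix k assume "k \<in> {..N}"
      then have "Suc N - k = Suc (N - k)" by auto
      then show "of_nat (N choose k) * S ((T ^^ k) ((S ^^ (N - k)) x)) = of_nat (N choose k) * (T ^^ k) ((S ^^ (Suc N - k)) x)"
        by (simp add: commute_funpow[of T S, OF C])
    qed
    show ?thesis using 1 2 Suc by simp
  qed
  also have "\<dots> = (\<Sum>k\<le>Suc N. of_nat (Suc N choose k) * (T ^^ k) ((S ^^ (Suc N - k)) x))"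
    using pascal_sum[of N "\<lambda>k l. (T ^^ k) ((S ^^ l) x)"] by simp
  finally show ?case .
qed

lemma op_frob2:
  assumes T: "addop T" and S: "addop S" and C: "\<And>x. T (S x) = S (T x)"
    and p0: "p > 0" and ch: "\<And>k. 0 < k \<Longrightarrow> k < p \<Longrightarrow> of_nat (p choose k) = (0::'v::comm_ring_1)"
  shows "((\<lambda>x. T x + S x) ^^ p) (x::'v) = (T ^^ p) x + (S ^^ p) x"
proof -
  have "((\<lambda>x. T x + S x) ^^ p) x = (\<Sum>k\<le>p. of_nat (p choose k) * (T ^^ k) ((S ^^ (p - k)) x))"
    by (rule op_binomial[OF T S C])
  also have "\<dots> = (\<Sum>k\<in>{0,p}. of_nat (p choose k) * (T ^^ k) ((S ^^ (p - k)) x))"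
  proof (intro sum.mono_neutral_right ballI)
    fix k assume "k \<in> {..p} - {0, p}"
    hence "0 < k" "k < p" by auto
    thus "of_nat (p choose k) * (T ^^ k) ((S ^^ (p - k)) x) = 0" using ch by simp
  qed auto
  finally show ?thesis using p0 by (simp add: add.commute)
qed

lemma sumop_insert: "finite J \<Longrightarrow> a \<notin> J \<Longrightarrow> (\<lambda>x. \<Sum>j\<in>insert a J. T j x) = (\<lambda>x. T a x + (\<Sum>j\<in>J. T j x))"
  by auto

lemma op_frob_sum:
  assumes fin: "finite J" and A: "\<And>j. j \<in> J \<Longrightarrow> addop (T j)"
    and C: "\<And>i j x. i \<in> J \<Longrightarrow> j \<in> J \<Longrightarrow> T i (T j x) = T j (T i x)"
    and p0: "p > 0" and ch: "\<And>k. 0 < k \<Longrightarrow> k < p \<Longrightarrow> of_nat (p choose k) = (0::'v::comm_ring_1)"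
  shows "((\<lambda>x::'v. \<Sum>j\<in>J. T j x) ^^ p) = (\<lambda>x. \<Sum>j\<in>J. (T j ^^ p) x)"
  using fin A C
proof (induct J rule: finite_induct)
  case empty
  have "((\<lambda>x::'v. 0::'v) ^^ p) x = 0" for x
    using p0 by (cases p) auto
  then show ?case by auto
next
  case (insert a J)
  have SA: "addop (\<lambda>x. \<Sum>j\<in>J. T j x)" by (rule addop_sumop) (use insert in auto)
  have CC: "T a (\<Sum>j\<in>J. T j x) = (\<Sum>j\<in>J. T j (T a x))" for x
    using insert by (simp add: addop_sum)
  show ?case
  proof
    fix x
    have "((\<lambda>x. \<Sum>j\<in>insert a J. T j x) ^^ p) x = ((\<lambda>x. T a x + (\<Sum>j\<in>J. T j x)) ^^ p) x"
      by (simp only: sumop_insert[OF insert(1,2), of T])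
    also have "\<dots> = (T a ^^ p) x + ((\<lambda>x. \<Sum>j\<in>J. T j x) ^^ p) x"
      by (rule op_frob2[OF _ SA _ p0 ch]) (use insert CC in auto)
    also have "\<dots> = (\<Sum>j\<in>insert a J. (T j ^^ p) x)"
      using insert by simp
    finally show "((\<lambda>x. \<Sum>j\<in>insert a J. T j x) ^^ p) x = (\<Sum>j\<in>insert a J. (T j ^^ p) x)" .
  qed
qed

lemma closed_funpow: "(\<And>x. x \<in> W \<Longrightarrow> T x \<in> W) \<Longrightarrow> x \<in> W \<Longrightarrow> (T ^^ k) x \<in> W"
  by (induct k) auto

lemma closed_sum: "finite J \<Longrightarrow> (0::'v::comm_ring_1) \<in> W \<Longrightarrow> (\<And>x y. x \<in> W \<Longrightarrow> y \<in> W \<Longrightarrow> x + y \<in> W)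
  \<Longrightarrow> (\<And>j. j \<in> J \<Longrightarrow> g j \<in> W) \<Longrightarrow> (\<Sum>j\<in>J. g j) \<in> W"
  by (induct J rule: finite_induct) auto

lemma op_nilp:
  assumes fin: "finite J" and A: "\<And>j. j \<in> J \<Longrightarrow> addop (T j)"
    and C: "\<And>i j x. i \<in> J \<Longrightarrow> j \<in> J \<Longrightarrow> T i (T j x) = T j (T i x)"
    and W0: "(0::'v::comm_ring_1) \<in> W" and Wp: "\<And>x y. x \<in> W \<Longrightarrow> y \<in> W \<Longrightarrow> x + y \<in> W"
    and WT: "\<And>j x. j \<in> J \<Longrightarrow> x \<in> W \<Longrightarrow> T j x \<in> W"
    and K: "\<And>j x. j \<in> J \<Longrightarrow> x \<in> W \<Longrightarrow> (T j ^^ Suc (e j)) x = 0"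
  shows "x \<in> W \<Longrightarrow> ((\<lambda>x. \<Sum>j\<in>J. T j x) ^^ Suc (\<Sum>j\<in>J. e j)) x = 0"
  using fin A C WT K
proof (induct J arbitrary: x rule: finite_induct)
  case empty
  then show ?case by simp
next
  case (insert a J)
  define S where "S = (\<lambda>x. \<Sum>j\<in>J. T j x)"
  have SA: "addop S" unfolding S_def by (rule addop_sumop) (use insert in auto)
  have CC: "T a (S x) = S (T a x)" for x
    using insert by (simp add: addop_sum S_def)
  have SW: "y \<in> W \<Longrightarrow> S y \<in> W" for y
    unfolding S_def by (rule closed_sum[OF insert(1) W0 Wp]) (use insert in auto)
  have IH: "y \<in> W \<Longrightarrow> (S ^^ Suc (\<Sum>j\<in>J. e j)) y = 0" for y
    unfolding S_def by (rule insert.hyps(3)) (use insert in auto)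
  have TA: "addop (T a)" using insert by auto
  have TW: "y \<in> W \<Longrightarrow> T a y \<in> W" for y using insert by auto
  have TK: "y \<in> W \<Longrightarrow> (T a ^^ Suc (e a)) y = 0" for y using insert by auto
  define N where "N = Suc (e a + (\<Sum>j\<in>J. e j))"
  have "((\<lambda>x. \<Sum>j\<in>insert a J. T j x) ^^ Suc (\<Sum>j\<in>insert a J. e j)) x = ((\<lambda>x. T a x + S x) ^^ N) x"
    using insert(1,2) by (simp only: sumop_insert[OF insert(1,2), of T] sum.insert[OF insert(1,2)] S_def N_def)
  also have "\<dots> = (\<Sum>k\<le>N. of_nat (N choose k) * (T a ^^ k) ((S ^^ (N - k)) x))"
    by (rule op_binomial[OF TA SA CC])
  also have "\<dots> = 0"
  proof (rule sum.neutral, rule ballI)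
    fix k assume k: "k \<in> {..N}"
    have "(T a ^^ k) ((S ^^ (N - k)) x) = 0"
    proof (cases "Suc (e a) \<le> k")
      case True
      have y: "(S ^^ (N - k)) x \<in> W" by (rule closed_funpow[OF SW insert(4)])
      have "(T a ^^ k) ((S ^^ (N - k)) x) = (T a ^^ (k - Suc (e a))) ((T a ^^ Suc (e a)) ((S ^^ (N - k)) x))"
        using True by (metis funpow_add le_add_diff_inverse2 comp_apply)
      also have "\<dots> = 0" using TK[OF y] addop_zero[OF addop_funpow[OF TA]] by simp
      finally show ?thesis .
    next
      case False
      then have "N - k = (N - k - Suc (\<Sum>j\<in>J. e j)) + Suc (\<Sum>j\<in>J. e j)" unfolding N_def by auto
      then have "(S ^^ (N - k)) x = (S ^^ Suc (\<Sum>j\<in>J. e j)) ((S ^^ (N - k - Suc (\<Sum>j\<in>J. e j))) x)"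
        by (metis funpow_add add.commute comp_apply)
      also have "\<dots> = 0" by (rule IH[OF closed_funpow[OF SW insert(4)]])
      finally show ?thesis using addop_zero[OF addop_funpow[OF TA]] by simp
    qed
    then show "of_nat (N choose k) * (T a ^^ k) ((S ^^ (N - k)) x) = 0" by simp
  qed
  finally show ?case .
qed



lemma sum_fun_apply: "(\<Sum>j\<in>J. g j) (a::'x) = (\<Sum>j\<in>J. (g j a :: 'y::comm_monoid_add))"
  by (induct J rule: infinite_finite_induct) auto

lemma std_mon_le: "std_mon d n a \<Longrightarrow> (\<And>i. a' i \<le> a i) \<Longrightarrow> std_mon d n a'"
  unfolding std_mon_def by (metis le_zero_eq order.strict_trans1)

lemma std_mon_upd: "std_mon d n a \<Longrightarrow> std_mon d n (a(i := a i - k))"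
  by (rule std_mon_le) auto

lemma addop_mul_var: "addop (mul_var d n j :: ((nat \<Rightarrow> nat) \<Rightarrow> 'k::field) \<Rightarrow> _)"
  unfolding addop_def mul_var_def by (auto simp: fun_eq_iff)

lemma mul_var_scale: "mul_var d n j (\<lambda>a. c * f a) = (\<lambda>a. (c::'k::field) * mul_var d n j f a)"
  unfolding mul_var_def by (auto simp: fun_eq_iff)

lemma mul_var_commute: "mul_var d n i (mul_var d n j f) = mul_var d n j (mul_var d n i (f :: _ \<Rightarrow> 'k::field))"
proof (cases "i = j")
  case False
  then have ne: "i \<noteq> j" "j \<noteq> i" by auto
  show ?thesis unfolding mul_var_def
    by (auto simp: fun_eq_iff std_mon_upd ne fun_upd_twist[OF ne(1)])
qed simp

lemma mul_var_pow:
  assumes supp: "\<And>a. \<not> std_mon d n a \<Longrightarrow> f a = 0"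
  shows "(mul_var d n j ^^ k) f = (\<lambda>a. if std_mon d n a \<and> k \<le> a j then f (a(j := a j - k)) else (0::'k::field))"
proof (induct k)
  case 0
  show ?case using supp by (auto simp: fun_eq_iff mul_var_def)
next
  case (Suc k)
  show ?case
  proof
    fix a
    have "(mul_var d n j ^^ Suc k) f a = mul_var d n j ((mul_var d n j ^^ k) f) a" by simp
    also have "\<dots> = (if std_mon d n a \<and> Suc k \<le> a j then f (a(j := a j - Suc k)) else 0)"
      unfolding Suc by (auto simp: mul_var_def std_mon_upd)
    finally show "(mul_var d n j ^^ Suc k) f a = (if std_mon d n a \<and> Suc k \<le> a j then f (a(j := a j - Suc k)) else 0)" .
  qed
qed

definition Zop :: "(nat \<Rightarrow> nat) \<Rightarrow> nat \<Rightarrow> (nat \<Rightarrow> 'k::field) \<Rightarrow> nat \<Rightarrow> ((nat \<Rightarrow> nat) \<Rightarrow> 'k) \<Rightarrow> ((nat \<Rightarrow> nat) \<Rightarrow> 'k)" where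
  "Zop d n c j f = (\<lambda>a. c j * mul_var d n j f a)"

lemma mul_lin_sum: "mul_lin d n c = (\<lambda>f. \<Sum>j\<in>{..<n}. Zop d n c j f)"
  by (auto simp: fun_eq_iff mul_lin_def Zop_def sum_fun_apply)

lemma addop_Zop: "addop (Zop d n c j)"
  using addop_mul_var[of d n j] unfolding addop_def Zop_def by (simp add: fun_eq_iff distrib_left mul_var_def)

lemma Zop_commute: "Zop d n c i (Zop d n c j f) = Zop d n c j (Zop d n c i f)"
  unfolding Zop_def mul_var_scale using mul_var_commute[of d n i j f] by (auto simp: fun_eq_iff)

lemma Zop_pow: "(Zop d n c j ^^ k) f = (\<lambda>a. c j ^ k * (mul_var d n j ^^ k) f a)"
proof (induct k)
  case (Suc k)
  have "(Zop d n c j ^^ Suc k) f = Zop d n c j ((Zop d n c j ^^ k) f)" by simp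
  also have "\<dots> = (\<lambda>a. c j ^ Suc k * (mul_var d n j ^^ Suc k) f a)"
    unfolding Suc Zop_def mul_var_scale by (simp add: fun_eq_iff)
  finally show ?case .
qed simp

definition Wset :: "(nat \<Rightarrow> nat) \<Rightarrow> nat \<Rightarrow> (nat \<Rightarrow> nat) \<Rightarrow> nat set \<Rightarrow> ((nat \<Rightarrow> nat) \<Rightarrow> 'k::field) set" where
  "Wset d n r L = {f. \<forall>a. f a \<noteq> 0 \<longrightarrow> std_mon d n a \<and> (\<forall>i\<in>L. r i \<le> a i)}"

lemma Wset_0: "0 \<in> Wset d n r L" by (simp add: Wset_def)
lemma Wset_plus: "x \<in> Wset d n r L \<Longrightarrow> y \<in> Wset d n r L \<Longrightarrow> x + y \<in> Wset d n r L"
  by (auto simp: Wset_def) (metis add.right_neutral)+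
lemma Wset_Zop: "x \<in> Wset d n r L \<Longrightarrow> Zop d n c j x \<in> Wset d n r L"
  unfolding Wset_def Zop_def mul_var_def
  by (auto split: if_splits) (metis fun_upd_apply diff_le_self order.trans)

lemma kill:
  assumes ch: "CHAR('k::field) = p" and p0: "p > 0"
    and dN: "\<forall>i<n. d i = N i * p + r i \<and> 0 < r i \<and> r i \<le> p"
    and L: "L \<subseteq> {..<n}" "\<forall>i\<in>L. 0 < N i"
    and f: "f \<in> Wset d n r L"
  shows "(mul_lin d n c ^^ (p * Suc (\<Sum>j<n. N j - (if j \<in> L then 1 else 0)))) f = (0 :: (nat \<Rightarrow> nat) \<Rightarrow> 'k)"
proof -
  define e where "e = (\<lambda>j. N j - (if j \<in> L then 1 else 0))"
  have pr: "prime p" using ch p0 prime_CHAR_semidom[where 'a='k] by auto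
  have chz: "of_nat (p choose k) = (0::(nat \<Rightarrow> nat) \<Rightarrow> 'k)" if "0 < k" "k < p" for k
  proof -
    have "p dvd (p choose k)" by (rule dvd_choose_prime) (use that pr in auto)
    then have "of_nat (p choose k) = (0::'k)" using ch of_nat_eq_0_iff_char_dvd by blast
    then show ?thesis by (simp add: of_nat_fun fun_eq_iff)
  qed
  have frob: "mul_lin d n c ^^ p = (\<lambda>x. \<Sum>j\<in>{..<n}. (Zop d n c j ^^ p) x)"
    unfolding mul_lin_sum
    by (rule op_frob_sum[OF _ _ _ p0 chz]) (auto simp: addop_Zop Zop_commute)
  have "(mul_lin d n c ^^ (p * Suc (\<Sum>j<n. e j)))f = (((mul_lin d n c) ^^ p) ^^ Suc (\<Sum>j\<in>{..<n}. e j)) f"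
    by (simp add: funpow_mult)
  also have "\<dots> = 0"
    unfolding frob
  proof (rule op_nilp[where W = "Wset d n r L"])
    show "f \<in> Wset d n r L" by (rule f)
    show "0 \<in> Wset d n r L" by (rule Wset_0)
    show "x + y \<in> Wset d n r L" if "x \<in> Wset d n r L" "y \<in> Wset d n r L" for x y
      using that by (rule Wset_plus)
    show "addop (Zop d n c j ^^ p)" for j by (rule addop_funpow[OF addop_Zop])
    show "(Zop d n c i ^^ p) ((Zop d n c j ^^ p) x) = (Zop d n c j ^^ p) ((Zop d n c i ^^ p) x)" for i j x
    proof -
      have "Zop d n c i ((Zop d n c j ^^ p) y) = (Zop d n c j ^^ p) (Zop d n c i y)" for y
        by (rule commute_funpow[symmetric], rule Zop_commute)
      then show ?thesis by (rule commute_funpow)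
    qed
    show "(Zop d n c j ^^ p) x \<in> Wset d n r L" if "x \<in> Wset d n r L" for j x
      by (rule closed_funpow[OF Wset_Zop that])
    show "((Zop d n c j ^^ p) ^^ Suc (e j)) x = 0" if j: "j \<in> {..<n}" and x: "x \<in> Wset d n r L" for j x
    proof -
      have supp: "\<not> std_mon d n a \<Longrightarrow> x a = 0" for a using x by (auto simp: Wset_def)
      have "((Zop d n c j ^^ p) ^^ Suc (e j)) x = (Zop d n c j ^^ (p * Suc (e j))) x"
        by (simp add: funpow_mult)
      also have "\<dots> = 0"
      proof -
        have h: "(if std_mon d n a \<and> p * Suc (e j) \<le> a j then x (a(j := a j - p * Suc (e j))) else 0) = 0" for a
        proof (cases "std_mon d n a \<and> p * Suc (e j) \<le> a j")
          case True
          have jn: "j < n" using j by auto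
          have aj: "a j < d j" using True jn by (auto simp: std_mon_def)
          have dj: "d j = N j * p + r j" "0 < r j" "r j \<le> p" using dN jn by auto
          show ?thesis
          proof (cases "j \<in> L")
            case True2: True
            have "Suc (e j) = N j" using L True2 unfolding e_def by auto
            then have "a j - p * Suc (e j) < r j" using aj dj True by (simp add: mult.commute) linarith
            then have lt: "(a(j := a j - p * Suc (e j))) j < r j" by simp
            have "x (a(j := a j - p * Suc (e j))) = 0"
            proof (rule ccontr)
              assume "x (a(j := a j - p * Suc (e j))) \<noteq> 0"
              then have "r j \<le> (a(j := a j - p * Suc (e j))) j" using x True2 unfolding Wset_def by blast
              then show False using lt by simp
            qed
            then show ?thesis by simp
          next
            case False
            then have "Suc (e j) = Suc (N j)" unfolding e_def by auto
            then have "p * Suc (e j) = N j * p + p" by simp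
            moreover have "a j < N j * p + p" using aj dj by linarith
            ultimately have "\<not> p * Suc (e j) \<le> a j" by linarith
            then show ?thesis using True by auto
          qed
        qed auto
        have mv: "(mul_var d n j ^^ (p * Suc (e j))) x = (\<lambda>a. if std_mon d n a \<and> p * Suc (e j) \<le> a j then x (a(j := a j - p * Suc (e j))) else 0)"
          by (rule mul_var_pow[OF supp])
        show ?thesis unfolding Zop_pow mv h by (simp add: fun_eq_iff)
      qed
      finally show ?thesis .
    qed
  qed simp
  finally show ?thesis unfolding e_def .
qed



definition shop :: "(nat \<Rightarrow> nat) \<Rightarrow> nat \<Rightarrow> (nat \<Rightarrow> nat) \<Rightarrow> ((nat \<Rightarrow> nat) \<Rightarrow> 'k::field) \<Rightarrow> ((nat \<Rightarrow> nat) \<Rightarrow> 'k)" where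
  "shop d n b f = (\<lambda>a. if std_mon d n a \<and> (\<forall>i. b i \<le> a i) then f (\<lambda>i. a i - b i) else 0)"

lemma addop_shop: "addop (shop d n b)"
  unfolding addop_def shop_def by (simp add: fun_eq_iff)

lemma shop_scale: "shop d n b (\<lambda>a. c * f a) = (\<lambda>a. c * shop d n b f a)"
  unfolding shop_def by (simp add: fun_eq_iff)

lemma shop_mul_var: "shop d n b (mul_var d n j f) = mul_var d n j (shop d n b f)"
proof
  fix a
  show "shop d n b (mul_var d n j f) a = mul_var d n j (shop d n b f) a"
  proof (cases "std_mon d n a")
    case True
    have st: "std_mon d n (\<lambda>i. a i - b i)" by (rule std_mon_le[OF True]) auto
    have st2: "std_mon d n (a(j := a j - 1))" by (rule std_mon_upd[OF True])
    have cond: "((\<forall>i. b i \<le> a i) \<and> 1 \<le> a j - b j) \<longleftrightarrow> (1 \<le> a j \<and> (\<forall>i. b i \<le> (a(j := a j - 1)) i))"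
    proof
      assume H: "(\<forall>i. b i \<le> a i) \<and> 1 \<le> a j - b j"
      show "1 \<le> a j \<and> (\<forall>i. b i \<le> (a(j := a j - 1)) i)"
      proof (intro conjI allI)
        show "1 \<le> a j" using H by linarith
        fix i show "b i \<le> (a(j := a j - 1)) i" using H by (cases "i = j") auto
      qed
    next
      assume H: "1 \<le> a j \<and> (\<forall>i. b i \<le> (a(j := a j - 1)) i)"
      then have bj: "b j \<le> a j - 1" by (metis fun_upd_same)
      show "(\<forall>i. b i \<le> a i) \<and> 1 \<le> a j - b j"
      proof (intro conjI allI)
        show "1 \<le> a j - b j" using H bj by linarith
        fix i show "b i \<le> a i"
        proof (cases "i = j")
          case True then show ?thesis using bj by simp
        next
          case False then show ?thesis using H by (metis fun_upd_other)
        qed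
      qed
    qed
    show ?thesis
    proof (cases "(\<forall>i. b i \<le> a i) \<and> 1 \<le> a j - b j")
      case C: True
      then have C2: "1 \<le> a j" "\<forall>i. b i \<le> (a(j := a j - 1)) i" using cond by auto
      have argeq: "(\<lambda>i. a i - b i)(j := a j - Suc (b j)) = (\<lambda>i. (a(j := a j - 1)) i - b i)"
        by (rule ext) simp
      show ?thesis unfolding shop_def mul_var_def using True st st2 C C2
        by (simp add: argeq)
    next
      case C: False
      then have C2: "\<not> (1 \<le> a j \<and> (\<forall>i. b i \<le> (a(j := a j - 1)) i))" using cond by blast
      have L: "shop d n b (mul_var d n j f) a = 0" unfolding shop_def mul_var_def using C by (simp; blast)
      have R: "mul_var d n j (shop d n b f) a = 0"
      proof (cases "1 \<le> a j")
        case True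
        then have "\<not> (\<forall>i. b i \<le> (a(j := a j - 1)) i)" using C2 by blast
        then have "shop d n b f (a(j := a j - 1)) = 0" unfolding shop_def by (simp del: fun_upd_apply; blast)
        then show ?thesis unfolding mul_var_def by simp
      qed (simp add: mul_var_def)
      show ?thesis using L R by simp
    qed
  qed (simp add: shop_def mul_var_def)
qed

lemma shop_mul_lin: "shop d n b (mul_lin d n c f) = mul_lin d n c (shop d n b f)"
  unfolding mul_lin_sum addop_sum[OF addop_shop] Zop_def shop_scale shop_mul_var ..

lemma shop_W: "(\<forall>i\<in>L. r i \<le> b i) \<Longrightarrow> shop d n b g \<in> Wset d n r L"
  unfolding shop_def Wset_def by (auto split: if_splits dest: order.trans)

lemma sum_upd: "finite A \<Longrightarrow> j \<in> A \<Longrightarrow> sum (b(j := Suc (b j))) A = Suc (sum b A)"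
proof -
  assume A: "finite A" "j \<in> A"
  have "sum (b(j := Suc (b j))) A = Suc (b j) + sum (b(j := Suc (b j))) (A - {j})"
    using sum.remove[OF A, of "b(j := Suc (b j))"] by simp
  also have "sum (b(j := Suc (b j))) (A - {j}) = sum b (A - {j})" by (rule sum.cong) auto
  also have "sum b A = b j + sum b (A - {j})" using sum.remove[OF A] by simp
  ultimately show ?thesis by simp
qed

lemma exists_mon:
  assumes a0: "std_mon d n a0"
  shows "mdeg n a0 + k \<le> (\<Sum>i<n. d i - 1) \<Longrightarrow> \<exists>b. std_mon d n b \<and> (\<forall>i. a0 i \<le> b i) \<and> mdeg n b = mdeg n a0 + k"
proof (induct k)
  case 0 show ?case using a0 by auto
next
  case (Suc k)
  then obtain b where b: "std_mon d n b" "\<forall>i. a0 i \<le> b i" "mdeg n b = mdeg n a0 + k" by auto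
  have "\<exists>j<n. b j < d j - 1"
  proof (rule ccontr)
    assume "\<not> ?thesis" then have "\<forall>j<n. d j - 1 \<le> b j" by auto
    then have "(\<Sum>i<n. d i - 1) \<le> mdeg n b" unfolding mdeg_def by (intro sum_mono) auto
    then show False using Suc.prems b by linarith
  qed
  then obtain j where j: "j < n" "b j < d j - 1" by auto
  define b' where "b' = b(j := Suc (b j))"
  have "std_mon d n b'" using b(1) j unfolding b'_def std_mon_def by auto
  moreover have "\<forall>i. a0 i \<le> b' i" using b(2) unfolding b'_def by (auto simp: le_Suc_eq)
  moreover have "mdeg n b' = mdeg n a0 + Suc k" using b(3) j sum_upd[of "{..<n}" j b] unfolding b'_def mdeg_def by simp
  ultimately show ?case by blast
qed

theorem lemma3p4:
  fixes d N r :: "nat \<Rightarrow> nat" and n p :: nat and \<Lambda> :: "nat set"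
  assumes "CHAR('k::field) = p" and "p > 0"
    and "\<forall>i<n. d i > 0"
    and "\<forall>i<n. d i = N i * p + r i \<and> 0 < r i \<and> r i \<le> p"
    and "\<Lambda> \<subseteq> {..<n}"
    and "\<forall>i\<in>\<Lambda>. d i > r i"
    and "m = (\<Sum>i<n. int (N i)) - int (card \<Lambda>) + 1"
    and "2 * (\<Sum>i\<in>\<Lambda>. int (r i)) \<le> (\<Sum>i<n. int (d i) - 1) - m * int p"
  shows "\<not> has_SLP d n TYPE('k)"
proof
  assume "has_SLP d n TYPE('k)"
  then obtain c :: "nat \<Rightarrow> 'k" where c: "\<forall>i m. 1 \<le> m \<longrightarrow>
      maximal_rank (mul_lin d n c ^^ m) (Acomp d n i :: ((nat \<Rightarrow> nat) \<Rightarrow> 'k) set) (Acomp d n (i + m))"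
    unfolding has_SLP_def by blast
  have fin: "finite \<Lambda>" using assms(5) finite_subset by blast
  define e where "e = (\<lambda>j. N j - (if j \<in> \<Lambda> then 1 else 0))"
  define M where "M = p * Suc (\<Sum>j<n. e j)"
  define s where "s = (\<Sum>i\<in>\<Lambda>. r i)"
  define D where "D = (\<Sum>i<n. d i - 1)"
  define F where "F = (mul_lin d n c ^^ M)"
  have NL: "\<forall>i\<in>\<Lambda>. 0 < N i"
  proof
    fix i assume i: "i \<in> \<Lambda>"
    then have "i < n" using assms(5) by auto
    then have "d i = N i * p + r i" using assms(4) by auto
    moreover have "d i > r i" using i assms(6) by auto
    ultimately show "0 < N i" by (cases "N i") auto
  qed
  have M1: "1 \<le> M" unfolding M_def using assms(2) by simp
  have mr: "maximal_rank F (Acomp d n s) (Acomp d n (s + M))"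
    unfolding F_def using c M1 by blast
  have killF: "F f = 0" if "f \<in> Wset d n r \<Lambda>" for f
    unfolding F_def M_def e_def by (rule kill[OF assms(1,2,4,5) NL that])
  have ie: "int (e j) = int (N j) - (if j \<in> \<Lambda> then 1 else 0)" if "j < n" for j
    using NL unfolding e_def by (cases "j \<in> \<Lambda>") (auto simp: of_nat_diff)
  have cardL: "(\<Sum>j<n. (if j \<in> \<Lambda> then 1 else 0 :: int)) = int (card \<Lambda>)"
  proof -
    have "(\<Sum>j<n. (if j \<in> \<Lambda> then 1 else 0 :: int)) = (\<Sum>j\<in>{..<n} \<inter> \<Lambda>. 1)"
      by (rule sum.inter_restrict[symmetric]) simp
    also have "{..<n} \<inter> \<Lambda> = \<Lambda>" using assms(5) by auto
    finally show ?thesis by simp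
  qed
  have mM: "m = int (Suc (\<Sum>j<n. e j))"
  proof -
    have "int (\<Sum>j<n. e j) = (\<Sum>j<n. int (e j))" by simp
    also have "\<dots> = (\<Sum>j<n. int (N j) - (if j \<in> \<Lambda> then 1 else 0))" by (rule sum.cong) (auto simp: ie)
    also have "\<dots> = (\<Sum>j<n. int (N j)) - int (card \<Lambda>)" by (simp add: sum_subtractf cardL)
    finally show ?thesis using assms(7) by simp
  qed
  have iD: "int D = (\<Sum>i<n. int (d i) - 1)"
    unfolding D_def of_nat_sum by (rule sum.cong) (use assms(3) in \<open>auto simp: of_nat_diff\<close>)
  have hyp: "2 * s + M \<le> D"
  proof -
    have "int (2 * s + M) = 2 * (\<Sum>i\<in>\<Lambda>. int (r i)) + m * int p"
      unfolding s_def M_def mM by (simp add: of_nat_sum algebra_simps)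
    also have "\<dots> \<le> int D" using assms(8) iD by linarith
    finally show ?thesis by simp
  qed
  define a0 where "a0 = (\<lambda>i. if i \<in> \<Lambda> then r i else 0)"
  have a0std: "std_mon d n a0"
    unfolding std_mon_def a0_def using assms(3,5,6) by auto
  have a0deg: "mdeg n a0 = s"
  proof -
    have "mdeg n a0 = (\<Sum>j\<in>{..<n} \<inter> \<Lambda>. r j)"
      unfolding mdeg_def a0_def by (simp add: sum.inter_restrict)
    also have "{..<n} \<inter> \<Lambda> = \<Lambda>" using assms(5) by auto
    finally show ?thesis unfolding s_def .
  qed
  define \<delta> where "\<delta> = (\<lambda>a (b::nat \<Rightarrow> nat). if b = a then (1::'k) else 0)"
  have \<delta>A: "\<delta> a \<in> Acomp d n i" if "std_mon d n a" "mdeg n a = i" for a i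
    unfolding \<delta>_def Acomp_def using that by auto
  have notinj: "\<not> inj_on F (Acomp d n s)"
  proof
    assume inj: "inj_on F (Acomp d n s)"
    have 1: "\<delta> a0 \<in> Acomp d n s" by (rule \<delta>A[OF a0std a0deg])
    have 2: "(0::(nat \<Rightarrow> nat) \<Rightarrow> 'k) \<in> Acomp d n s" unfolding Acomp_def by simp
    have "\<delta> a0 \<in> Wset d n r \<Lambda>" unfolding Wset_def \<delta>_def a0_def using a0std a0_def by auto
    then have "F (\<delta> a0) = F 0" using killF[OF Wset_0] killF by simp
    then have "\<delta> a0 = 0" using inj_onD[OF inj _ 1 2] by blast
    then have "\<delta> a0 a0 = 0" by simp
    then show False unfolding \<delta>_def by simp
  qed
  have notsurj: "F ` Acomp d n s \<noteq> Acomp d n (s + M)"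
  proof
    assume surj: "F ` Acomp d n s = Acomp d n (s + M)"
    obtain b where b: "std_mon d n b" "\<forall>i. a0 i \<le> b i" "mdeg n b = mdeg n a0 + (D - s - M - s)"
      using exists_mon[OF a0std, of "D - s - M - s"] hyp a0deg unfolding D_def by auto
    have bdeg: "mdeg n b = D - s - M" using b(3) a0deg hyp by simp
    define top where "top = (\<lambda>i. if i < n then d i - 1 else 0)"
    define t where "t = (\<lambda>i. top i - b i)"
    have btop: "\<forall>i. b i \<le> top i"
    proof
      fix i show "b i \<le> top i"
      proof (cases "i < n")
        case True then have "b i < d i" using b(1) unfolding std_mon_def by auto
        then show ?thesis using True unfolding top_def by simp
      next
        case False then have "b i = 0" using b(1) unfolding std_mon_def by auto
        then show ?thesis by simp
      qed
    qed
    have topstd: "std_mon d n top" unfolding std_mon_def top_def using assms(3) by auto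
    have tstd: "std_mon d n t" unfolding t_def by (rule std_mon_le[OF topstd]) auto
    have tdeg: "mdeg n t = s + M"
    proof -
      have "mdeg n t = (\<Sum>i<n. top i) - (\<Sum>i<n. b i)"
        unfolding mdeg_def t_def by (rule sum_subtractf_nat) (use btop in auto)
      also have "(\<Sum>i<n. top i) = D" unfolding D_def top_def by simp
      finally show ?thesis using bdeg hyp unfolding mdeg_def by simp
    qed
    have "\<delta> t \<in> F ` Acomp d n s" using surj \<delta>A[OF tstd tdeg] by simp
    then obtain g where g: "g \<in> Acomp d n s" "F g = \<delta> t" by auto
    have "shop d n b (F g) = F (shop d n b g)"
    proof -
      have "(mul_lin d n c ^^ M) (shop d n b g) = shop d n b ((mul_lin d n c ^^ M) g)"
        by (rule commute_funpow) (rule shop_mul_lin[symmetric])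
      then show ?thesis unfolding F_def by simp
    qed
    also have "\<dots> = 0"
      by (rule killF, rule shop_W) (use b(2) in \<open>auto simp: a0_def split: if_splits\<close>)
    finally have "shop d n b (\<delta> t) top = 0" using g by simp
    moreover have "shop d n b (\<delta> t) top = 1"
      unfolding shop_def using topstd btop by (simp add: \<delta>_def t_def)
    ultimately show False by simp
  qed
  show False using mr notinj notsurj unfolding maximal_rank_def by blast
qed

end
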